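(* Let $\mathcal{C}$ be a deflation-exact category and let $\mathcal{A}$ be a full subcategory of $\mathcal{C}$ satisfying axioms (A1) and (A3). Then the composition of two $\mathcal{A}^{-1}$-inflations is again an $\mathcal{A}^{-1}$-inflation.
   Context: A conflation category is an additive category with a class of kernel-cokernel pairs (closed under isomorphisms) called conflations; first map an inflation, second a deflation. A deflation-exact category is a conflation category satisfying: (R0) $1_0$ is a deflation; (R1) composites of deflations are deflations; (R2) pullbacks of deflations along arbitrary morphisms exist and are deflations. (A1): for every conflation $A'\rightarrowtail A\twoheadrightarrow A''$ in $\mathcal{C}$, $A\in\mathcal{A}$ iff $A',A''\in\mathcal{A}$. (A3): if $a\colon C\rightarrowtail D$ is an inflation and $b\colon C\twoheadrightarrow A$ a deflation with $A\in\mathcal{A}$, then the pushout of $a$ along $b$ exists and yields a deflation $D\twoheadrightarrow P$ and an inflation $A\rightarrowtail P$. An $\mathcal{A}^{-1}$-inflation is an inflation whose cokernel lies in $\mathcal{A}$. *)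

theory Defs
  imports Main
begin

record ('o, 'm) addcat =
  Ob  :: "'o set"
  Ar  :: "'m set"
  dom :: "'m \<Rightarrow> 'o"
  cod :: "'m \<Rightarrow> 'o"
  cmp :: "'m \<Rightarrow> 'm \<Rightarrow> 'm"   (* cmp C g f = g o f *)
  idm :: "'o \<Rightarrow> 'm"
  zer :: "'o \<Rightarrow> 'o \<Rightarrow> 'm"
  add :: "'m \<Rightarrow> 'm \<Rightarrow> 'm"
  ngt :: "'m \<Rightarrow> 'm"

definition hom :: "('o, 'm) addcat \<Rightarrow> 'o \<Rightarrow> 'o \<Rightarrow> 'm set" where
  "hom C a b = {f \<in> Ar C. dom C f = a \<and> cod C f = b}"

definition is_category :: "('o, 'm) addcat \<Rightarrow> bool" where
  "is_category C \<longleftrightarrow>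
     (\<forall>f \<in> Ar C. dom C f \<in> Ob C \<and> cod C f \<in> Ob C) \<and>
     (\<forall>a \<in> Ob C. idm C a \<in> hom C a a) \<and>
     (\<forall>f \<in> Ar C. \<forall>g \<in> Ar C. cod C f = dom C g \<longrightarrow>
        cmp C g f \<in> hom C (dom C f) (cod C g)) \<and>
     (\<forall>f \<in> Ar C. cmp C (idm C (cod C f)) f = f \<and> cmp C f (idm C (dom C f)) = f) \<and>
     (\<forall>f \<in> Ar C. \<forall>g \<in> Ar C. \<forall>h \<in> Ar C. cod C f = dom C g \<longrightarrow> cod C g = dom C h \<longrightarrow>
        cmp C h (cmp C g f) = cmp C (cmp C h g) f)"

definition is_preadditive :: "('o, 'm) addcat \<Rightarrow> bool" where
  "is_preadditive C \<longleftrightarrow> is_category C \<and>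
     (\<forall>a \<in> Ob C. \<forall>b \<in> Ob C.
        zer C a b \<in> hom C a b \<and>
        (\<forall>f \<in> hom C a b. \<forall>g \<in> hom C a b. add C f g \<in> hom C a b) \<and>
        (\<forall>f \<in> hom C a b. ngt C f \<in> hom C a b) \<and>
        (\<forall>f \<in> hom C a b. \<forall>g \<in> hom C a b. \<forall>h \<in> hom C a b.
           add C (add C f g) h = add C f (add C g h)) \<and>
        (\<forall>f \<in> hom C a b. \<forall>g \<in> hom C a b. add C f g = add C g f) \<and>
        (\<forall>f \<in> hom C a b. add C f (zer C a b) = f) \<and>
        (\<forall>f \<in> hom C a b. add C f (ngt C f) = zer C a b)) \<and>
     (\<forall>a \<in> Ob C. \<forall>b \<in> Ob C. \<forall>c \<in> Ob C.
        (\<forall>f \<in> hom C a b. \<forall>g \<in> hom C b c. \<forall>g' \<in> hom C b c.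
           cmp C (add C g g') f = add C (cmp C g f) (cmp C g' f)) \<and>
        (\<forall>f \<in> hom C a b. \<forall>f' \<in> hom C a b. \<forall>g \<in> hom C b c.
           cmp C g (add C f f') = add C (cmp C g f) (cmp C g f')))"

definition is_zero_object :: "('o, 'm) addcat \<Rightarrow> 'o \<Rightarrow> bool" where
  "is_zero_object C z \<longleftrightarrow> z \<in> Ob C \<and>
     (\<forall>a \<in> Ob C. (\<exists>!f. f \<in> hom C z a) \<and> (\<exists>!f. f \<in> hom C a z))"

definition is_biproduct :: "('o, 'm) addcat \<Rightarrow> 'o \<Rightarrow> 'o \<Rightarrow> 'o \<Rightarrow> 'm \<Rightarrow> 'm \<Rightarrow> 'm \<Rightarrow> 'm \<Rightarrow> bool" where
  "is_biproduct C a b p i1 i2 p1 p2 \<longleftrightarrow> p \<in> Ob C \<and>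
     i1 \<in> hom C a p \<and> i2 \<in> hom C b p \<and> p1 \<in> hom C p a \<and> p2 \<in> hom C p b \<and>
     cmp C p1 i1 = idm C a \<and> cmp C p2 i2 = idm C b \<and>
     cmp C p2 i1 = zer C a b \<and> cmp C p1 i2 = zer C b a \<and>
     add C (cmp C i1 p1) (cmp C i2 p2) = idm C p"

definition is_additive :: "('o, 'm) addcat \<Rightarrow> bool" where
  "is_additive C \<longleftrightarrow> is_preadditive C \<and> (\<exists>z. is_zero_object C z) \<and>
     (\<forall>a \<in> Ob C. \<forall>b \<in> Ob C. \<exists>p i1 i2 p1 p2. is_biproduct C a b p i1 i2 p1 p2)"

definition is_kernel :: "('o, 'm) addcat \<Rightarrow> 'm \<Rightarrow> 'm \<Rightarrow> bool" where
  "is_kernel C k f \<longleftrightarrow> k \<in> Ar C \<and> f \<in> Ar C \<and> cod C k = dom C f \<and>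
     cmp C f k = zer C (dom C k) (cod C f) \<and>
     (\<forall>x \<in> Ob C. \<forall>g \<in> hom C x (dom C f). cmp C f g = zer C x (cod C f) \<longrightarrow>
        (\<exists>!h. h \<in> hom C x (dom C k) \<and> cmp C k h = g))"

definition is_cokernel :: "('o, 'm) addcat \<Rightarrow> 'm \<Rightarrow> 'm \<Rightarrow> bool" where
  "is_cokernel C c f \<longleftrightarrow> c \<in> Ar C \<and> f \<in> Ar C \<and> dom C c = cod C f \<and>
     cmp C c f = zer C (dom C f) (cod C c) \<and>
     (\<forall>x \<in> Ob C. \<forall>g \<in> hom C (cod C f) x. cmp C g f = zer C (dom C f) x \<longrightarrow>
        (\<exists>!h. h \<in> hom C (cod C c) x \<and> cmp C h c = g))"

definition is_kernel_cokernel_pair :: "('o, 'm) addcat \<Rightarrow> 'm \<Rightarrow> 'm \<Rightarrow> bool" where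
  "is_kernel_cokernel_pair C i p \<longleftrightarrow> is_kernel C i p \<and> is_cokernel C p i"

definition is_iso :: "('o, 'm) addcat \<Rightarrow> 'm \<Rightarrow> bool" where
  "is_iso C f \<longleftrightarrow> f \<in> Ar C \<and> (\<exists>g \<in> hom C (cod C f) (dom C f).
     cmp C g f = idm C (dom C f) \<and> cmp C f g = idm C (cod C f))"

text \<open>Square  f' : P -> B,  p' : P -> C',  with  p o f' = f o p'  (p : B -> X, f : C' -> X)
  is a pullback of p along f.\<close>
definition is_pullback :: "('o, 'm) addcat \<Rightarrow> 'm \<Rightarrow> 'm \<Rightarrow> 'm \<Rightarrow> 'm \<Rightarrow> bool" where
  "is_pullback C p f f' p' \<longleftrightarrow> p \<in> Ar C \<and> f \<in> Ar C \<and> f' \<in> Ar C \<and> p' \<in> Ar C \<and>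
     cod C p = cod C f \<and> dom C f' = dom C p' \<and> cod C f' = dom C p \<and> cod C p' = dom C f \<and>
     cmp C p f' = cmp C f p' \<and>
     (\<forall>x \<in> Ob C. \<forall>u \<in> hom C x (dom C p). \<forall>v \<in> hom C x (dom C f).
        cmp C p u = cmp C f v \<longrightarrow>
        (\<exists>!h. h \<in> hom C x (dom C f') \<and> cmp C f' h = u \<and> cmp C p' h = v))"

text \<open>Square  b' : D -> P,  a' : A -> P,  with  b' o a = a' o b  (a : X -> D, b : X -> A)
  is a pushout of a along b.\<close>
definition is_pushout :: "('o, 'm) addcat \<Rightarrow> 'm \<Rightarrow> 'm \<Rightarrow> 'm \<Rightarrow> 'm \<Rightarrow> bool" where
  "is_pushout C a b b' a' \<longleftrightarrow> a \<in> Ar C \<and> b \<in> Ar C \<and> b' \<in> Ar C \<and> a' \<in> Ar C \<and>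
     dom C a = dom C b \<and> cod C b' = cod C a' \<and> dom C b' = cod C a \<and> dom C a' = cod C b \<and>
     cmp C b' a = cmp C a' b \<and>
     (\<forall>x \<in> Ob C. \<forall>u \<in> hom C (cod C a) x. \<forall>v \<in> hom C (cod C b) x.
        cmp C u a = cmp C v b \<longrightarrow>
        (\<exists>!h. h \<in> hom C (cod C b') x \<and> cmp C h b' = u \<and> cmp C h a' = v))"

text \<open>Conf is the class of conflations, given as pairs (inflation, deflation).\<close>
definition conflation_category :: "('o, 'm) addcat \<Rightarrow> ('m \<times> 'm) set \<Rightarrow> bool" where
  "conflation_category C Conf \<longleftrightarrow> is_additive C \<and>
     (\<forall>(i, p) \<in> Conf. is_kernel_cokernel_pair C i p) \<and>
     (\<forall>(i, p) \<in> Conf. \<forall>i' p' u' u u''.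
        is_kernel_cokernel_pair C i' p' \<and>
        is_iso C u' \<and> is_iso C u \<and> is_iso C u'' \<and>
        dom C u' = dom C i \<and> cod C u' = dom C i' \<and>
        dom C u = cod C i \<and> cod C u = cod C i' \<and>
        dom C u'' = cod C p \<and> cod C u'' = cod C p' \<and>
        cmp C u i = cmp C i' u' \<and> cmp C u'' p = cmp C p' u
        \<longrightarrow> (i', p') \<in> Conf)"

definition inflation :: "('m \<times> 'm) set \<Rightarrow> 'm \<Rightarrow> bool" where
  "inflation Conf i \<longleftrightarrow> (\<exists>p. (i, p) \<in> Conf)"

definition deflation :: "('m \<times> 'm) set \<Rightarrow> 'm \<Rightarrow> bool" where
  "deflation Conf p \<longleftrightarrow> (\<exists>i. (i, p) \<in> Conf)"

definition deflation_exact :: "('o, 'm) addcat \<Rightarrow> ('m \<times> 'm) set \<Rightarrow> bool" where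
  "deflation_exact C Conf \<longleftrightarrow> conflation_category C Conf \<and>
     \<comment> \<open>(R0)\<close>
     (\<forall>z. is_zero_object C z \<longrightarrow> deflation Conf (idm C z)) \<and>
     \<comment> \<open>(R1)\<close>
     (\<forall>p q. deflation Conf p \<and> deflation Conf q \<and> cod C p = dom C q
        \<longrightarrow> deflation Conf (cmp C q p)) \<and>
     \<comment> \<open>(R2)\<close>
     (\<forall>p f. deflation Conf p \<and> f \<in> Ar C \<and> cod C f = cod C p \<longrightarrow>
        (\<exists>f' p'. is_pullback C p f f' p' \<and> deflation Conf p'))"

section \<open>Axioms on a full subcategory, given by its class of objects A\<close>

definition axiom_A1 :: "('o, 'm) addcat \<Rightarrow> ('m \<times> 'm) set \<Rightarrow> 'o set \<Rightarrow> bool" where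
  "axiom_A1 C Conf A \<longleftrightarrow>
     (\<forall>(i, p) \<in> Conf. cod C i \<in> A \<longleftrightarrow> (dom C i \<in> A \<and> cod C p \<in> A))"

definition axiom_A3 :: "('o, 'm) addcat \<Rightarrow> ('m \<times> 'm) set \<Rightarrow> 'o set \<Rightarrow> bool" where
  "axiom_A3 C Conf A \<longleftrightarrow>
     (\<forall>a b. inflation Conf a \<and> deflation Conf b \<and> dom C a = dom C b \<and> cod C b \<in> A \<longrightarrow>
        (\<exists>b' a'. is_pushout C a b b' a' \<and> deflation Conf b' \<and> inflation Conf a'))"

definition A_inv_inflation :: "('o, 'm) addcat \<Rightarrow> ('m \<times> 'm) set \<Rightarrow> 'o set \<Rightarrow> 'm \<Rightarrow> bool" where
  "A_inv_inflation C Conf A i \<longleftrightarrow> (\<exists>p. (i, p) \<in> Conf \<and> cod C p \<in> A)"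

end

theory Submission
  imports Defs
begin

locale pa = fixes C :: "('o, 'm) addcat" assumes pa: "is_preadditive C"
begin

lemma cat: "is_category C" using pa by (simp add: is_preadditive_def)

lemma dom_ob[simp]: "f \<in> Ar C \<Longrightarrow> dom C f \<in> Ob C"
  using cat by (simp add: is_category_def)
lemma cod_ob[simp]: "f \<in> Ar C \<Longrightarrow> cod C f \<in> Ob C"
  using cat by (simp add: is_category_def)
lemma id_ar[simp]: "a \<in> Ob C \<Longrightarrow> idm C a \<in> Ar C"
  using cat by (simp add: is_category_def hom_def)
lemma id_dom[simp]: "a \<in> Ob C \<Longrightarrow> dom C (idm C a) = a"
  using cat by (simp add: is_category_def hom_def)
lemma id_cod[simp]: "a \<in> Ob C \<Longrightarrow> cod C (idm C a) = a"
  using cat by (simp add: is_category_def hom_def)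
lemma cmp_ar[simp]: "f \<in> Ar C \<Longrightarrow> g \<in> Ar C \<Longrightarrow> cod C f = dom C g \<Longrightarrow> cmp C g f \<in> Ar C"
  using cat unfolding is_category_def hom_def by blast
lemma cmp_dom[simp]: "f \<in> Ar C \<Longrightarrow> g \<in> Ar C \<Longrightarrow> cod C f = dom C g \<Longrightarrow> dom C (cmp C g f) = dom C f"
  using cat unfolding is_category_def hom_def by blast
lemma cmp_cod[simp]: "f \<in> Ar C \<Longrightarrow> g \<in> Ar C \<Longrightarrow> cod C f = dom C g \<Longrightarrow> cod C (cmp C g f) = cod C g"
  using cat unfolding is_category_def hom_def by blast
lemma id_l: "f \<in> Ar C \<Longrightarrow> cmp C (idm C (cod C f)) f = f"
  using cat unfolding is_category_def by blast
lemma id_r: "f \<in> Ar C \<Longrightarrow> cmp C f (idm C (dom C f)) = f"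
  using cat unfolding is_category_def by blast
lemma assoc: "f \<in> Ar C \<Longrightarrow> g \<in> Ar C \<Longrightarrow> h \<in> Ar C \<Longrightarrow> cod C f = dom C g \<Longrightarrow> cod C g = dom C h \<Longrightarrow>
   cmp C (cmp C h g) f = cmp C h (cmp C g f)"
  using cat unfolding is_category_def by metis

lemma zer_ar[simp]: "a \<in> Ob C \<Longrightarrow> b \<in> Ob C \<Longrightarrow> zer C a b \<in> Ar C"
  using pa unfolding is_preadditive_def hom_def by blast
lemma zer_dom[simp]: "a \<in> Ob C \<Longrightarrow> b \<in> Ob C \<Longrightarrow> dom C (zer C a b) = a"
  using pa unfolding is_preadditive_def hom_def by blast
lemma zer_cod[simp]: "a \<in> Ob C \<Longrightarrow> b \<in> Ob C \<Longrightarrow> cod C (zer C a b) = b"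
  using pa unfolding is_preadditive_def hom_def by blast

lemma idem_zero:
  assumes x: "x \<in> hom C a b" and a: "a \<in> Ob C" and b: "b \<in> Ob C" and e: "add C x x = x"
  shows "x = zer C a b"
proof -
  have n: "ngt C x \<in> hom C a b" and z: "zer C a b = add C x (ngt C x)"
    and as: "add C (add C x x) (ngt C x) = add C x (add C x (ngt C x))"
    and zr: "add C x (zer C a b) = x"
    using pa a b x unfolding is_preadditive_def by (metis (no_types, lifting))+
  have "zer C a b = add C (add C x x) (ngt C x)" using z e by simp
  also have "\<dots> = x" using as z zr by simp
  finally show ?thesis by simp
qed

lemma zero_left:
  assumes f: "f \<in> Ar C" and c: "c \<in> Ob C"
  shows "cmp C (zer C (cod C f) c) f = zer C (dom C f) c"
proof -
  let ?z = "zer C (cod C f) c"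
  have zh: "?z \<in> hom C (cod C f) c" using f c by (simp add: hom_def)
  have fh: "f \<in> hom C (dom C f) (cod C f)" using f by (simp add: hom_def)
  have zz: "add C ?z ?z = ?z" using pa zh f c unfolding is_preadditive_def by (meson cod_ob)
  have "cmp C (add C ?z ?z) f = add C (cmp C ?z f) (cmp C ?z f)"
    using pa zh fh f c unfolding is_preadditive_def by (meson cod_ob dom_ob)
  then have "add C (cmp C ?z f) (cmp C ?z f) = cmp C ?z f" using zz by simp
  moreover have "cmp C ?z f \<in> hom C (dom C f) c" using f c by (simp add: hom_def)
  ultimately show ?thesis using idem_zero f c by simp
qed

lemma zero_right:
  assumes g: "g \<in> Ar C" and a: "a \<in> Ob C"
  shows "cmp C g (zer C a (dom C g)) = zer C a (cod C g)"
proof -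
  let ?z = "zer C a (dom C g)"
  have zh: "?z \<in> hom C a (dom C g)" using g a by (simp add: hom_def)
  have gh: "g \<in> hom C (dom C g) (cod C g)" using g by (simp add: hom_def)
  have zz: "add C ?z ?z = ?z" using pa zh g a unfolding is_preadditive_def by (meson dom_ob)
  have "cmp C g (add C ?z ?z) = add C (cmp C g ?z) (cmp C g ?z)"
    using pa zh gh g a unfolding is_preadditive_def by (meson cod_ob dom_ob)
  then have "add C (cmp C g ?z) (cmp C g ?z) = cmp C g ?z" using zz by simp
  moreover have "cmp C g ?z \<in> hom C a (cod C g)" using g a by (simp add: hom_def)
  ultimately show ?thesis using idem_zero g a by simp
qed

end

context pa begin

lemma ex1_uniq: "\<exists>!h. P h \<Longrightarrow> P x \<Longrightarrow> P y \<Longrightarrow> x = y" by blast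

lemma kerD: "is_kernel C k f \<Longrightarrow> k \<in> Ar C \<and> f \<in> Ar C \<and> cod C k = dom C f \<and> cmp C f k = zer C (dom C k) (cod C f)"
  by (simp add: is_kernel_def)
lemma cokD: "is_cokernel C c f \<Longrightarrow> c \<in> Ar C \<and> f \<in> Ar C \<and> dom C c = cod C f \<and> cmp C c f = zer C (dom C f) (cod C c)"
  by (simp add: is_cokernel_def)

lemma ker_univ: "is_kernel C k f \<Longrightarrow> x \<in> Ob C \<Longrightarrow> g \<in> hom C x (dom C f) \<Longrightarrow>
  cmp C f g = zer C x (cod C f) \<Longrightarrow> \<exists>!h. h \<in> hom C x (dom C k) \<and> cmp C k h = g"
  unfolding is_kernel_def by blast
lemma cok_univ: "is_cokernel C c f \<Longrightarrow> x \<in> Ob C \<Longrightarrow> g \<in> hom C (cod C f) x \<Longrightarrow>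
  cmp C g f = zer C (dom C f) x \<Longrightarrow> \<exists>!h. h \<in> hom C (cod C c) x \<and> cmp C h c = g"
  unfolding is_cokernel_def by blast
lemma po_univ: "is_pushout C a b b' a' \<Longrightarrow> x \<in> Ob C \<Longrightarrow> u \<in> hom C (cod C a) x \<Longrightarrow>
  v \<in> hom C (cod C b) x \<Longrightarrow> cmp C u a = cmp C v b \<Longrightarrow>
  \<exists>!h. h \<in> hom C (cod C b') x \<and> cmp C h b' = u \<and> cmp C h a' = v"
  unfolding is_pushout_def by blast

lemma ker_factor:
  assumes "is_kernel C k f" "t \<in> Ar C" "cod C t = dom C f" "cmp C f t = zer C (dom C t) (cod C f)"
  shows "\<exists>s. s \<in> Ar C \<and> dom C s = dom C t \<and> cod C s = dom C k \<and> cmp C k s = t"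
proof -
  have "\<exists>!h. h \<in> hom C (dom C t) (dom C k) \<and> cmp C k h = t"
    using ker_univ[OF assms(1), of "dom C t" t] assms by (simp add: hom_def)
  then show ?thesis by (auto simp: hom_def)
qed

lemma cok_factor:
  assumes "is_cokernel C c f" "t \<in> Ar C" "dom C t = cod C f" "cmp C t f = zer C (dom C f) (cod C t)"
  shows "\<exists>s. s \<in> Ar C \<and> dom C s = cod C c \<and> cod C s = cod C t \<and> cmp C s c = t"
proof -
  have "\<exists>!h. h \<in> hom C (cod C c) (cod C t) \<and> cmp C h c = t"
    using cok_univ[OF assms(1), of "cod C t" t] assms by (simp add: hom_def)
  then show ?thesis by (auto simp: hom_def)
qed

lemma ker_mono:
  assumes k: "is_kernel C k f" and x: "x \<in> Ar C" and y: "y \<in> Ar C"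
    and "cod C x = dom C k" "cod C y = dom C k" "dom C x = dom C y" and e: "cmp C k x = cmp C k y"
  shows "x = y"
proof -
  have kk: "k \<in> Ar C" "f \<in> Ar C" "cod C k = dom C f" "cmp C f k = zer C (dom C k) (cod C f)"
    using kerD[OF k] by auto
  let ?t = "cmp C k x"
  have t: "?t \<in> Ar C" "cod C ?t = dom C f" "dom C ?t = dom C x" using kk x assms by auto
  have "cmp C f ?t = cmp C (cmp C f k) x"
    using assoc[of x k f] kk x assms(4) by simp
  also have "\<dots> = zer C (dom C x) (cod C f)"
    using kk(4) zero_left[of x "cod C f"] x assms(4) kk by simp
  finally have "cmp C f ?t = zer C (dom C x) (cod C f)" .
  then have U: "\<exists>!h. h \<in> hom C (dom C x) (dom C k) \<and> cmp C k h = ?t"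
    using ker_univ[OF k, of "dom C x" ?t] t x by (simp add: hom_def)
  show ?thesis
    by (rule ex1_uniq[OF U]) (use assms in \<open>auto simp: hom_def\<close>)
qed

lemma cok_epi:
  assumes c: "is_cokernel C c f" and x: "x \<in> Ar C" and y: "y \<in> Ar C"
    and "dom C x = cod C c" "dom C y = cod C c" "cod C x = cod C y" and e: "cmp C x c = cmp C y c"
  shows "x = y"
proof -
  have kk: "c \<in> Ar C" "f \<in> Ar C" "dom C c = cod C f" "cmp C c f = zer C (dom C f) (cod C c)"
    using cokD[OF c] by auto
  let ?t = "cmp C x c"
  have t: "?t \<in> Ar C" "dom C ?t = cod C f" "cod C ?t = cod C x" using kk x assms by auto
  have "cmp C ?t f = cmp C x (cmp C c f)"
    using assoc[of f c x] kk x assms(4) by simp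
  also have "\<dots> = zer C (dom C f) (cod C x)"
    using kk(4) zero_right[of x "dom C f"] x assms(4) kk by simp
  finally have "cmp C ?t f = zer C (dom C f) (cod C x)" .
  then have U: "\<exists>!h. h \<in> hom C (cod C c) (cod C x) \<and> cmp C h c = ?t"
    using cok_univ[OF c, of "cod C x" ?t] t x by (simp add: hom_def)
  show ?thesis
    by (rule ex1_uniq[OF U]) (use assms in \<open>auto simp: hom_def\<close>)
qed

lemma kerI:
  assumes "k \<in> Ar C" "f \<in> Ar C" "cod C k = dom C f" "cmp C f k = zer C (dom C k) (cod C f)"
    and ex: "\<And>t. t \<in> Ar C \<Longrightarrow> cod C t = dom C f \<Longrightarrow> cmp C f t = zer C (dom C t) (cod C f) \<Longrightarrow>
       \<exists>s. s \<in> Ar C \<and> dom C s = dom C t \<and> cod C s = dom C k \<and> cmp C k s = t"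
    and un: "\<And>x y. x \<in> Ar C \<Longrightarrow> y \<in> Ar C \<Longrightarrow> cod C x = dom C k \<Longrightarrow> cod C y = dom C k \<Longrightarrow>
       dom C x = dom C y \<Longrightarrow> cmp C k x = cmp C k y \<Longrightarrow> x = y"
  shows "is_kernel C k f"
  unfolding is_kernel_def
proof (intro conjI ballI impI)
  fix x g assume "x \<in> Ob C" "g \<in> hom C x (dom C f)" "cmp C f g = zer C x (cod C f)"
  then obtain s where s: "s \<in> Ar C \<and> dom C s = x \<and> cod C s = dom C k \<and> cmp C k s = g"
    using ex[of g] by (auto simp: hom_def)
  show "\<exists>!h. h \<in> hom C x (dom C k) \<and> cmp C k h = g"
  proof (rule ex1I[of _ s])
    show "s \<in> hom C x (dom C k) \<and> cmp C k s = g" using s by (simp add: hom_def)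
    fix h assume "h \<in> hom C x (dom C k) \<and> cmp C k h = g"
    then show "h = s" using un[of h s] s by (auto simp: hom_def)
  qed
qed (use assms in auto)

lemma cokI:
  assumes "c \<in> Ar C" "f \<in> Ar C" "dom C c = cod C f" "cmp C c f = zer C (dom C f) (cod C c)"
    and ex: "\<And>t. t \<in> Ar C \<Longrightarrow> dom C t = cod C f \<Longrightarrow> cmp C t f = zer C (dom C f) (cod C t) \<Longrightarrow>
       \<exists>s. s \<in> Ar C \<and> dom C s = cod C c \<and> cod C s = cod C t \<and> cmp C s c = t"
    and un: "\<And>x y. x \<in> Ar C \<Longrightarrow> y \<in> Ar C \<Longrightarrow> dom C x = cod C c \<Longrightarrow> dom C y = cod C c \<Longrightarrow>
       cod C x = cod C y \<Longrightarrow> cmp C x c = cmp C y c \<Longrightarrow> x = y"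
  shows "is_cokernel C c f"
  unfolding is_cokernel_def
proof (intro conjI ballI impI)
  fix x g assume "x \<in> Ob C" "g \<in> hom C (cod C f) x" "cmp C g f = zer C (dom C f) x"
  then obtain s where s: "s \<in> Ar C \<and> dom C s = cod C c \<and> cod C s = x \<and> cmp C s c = g"
    using ex[of g] by (auto simp: hom_def)
  show "\<exists>!h. h \<in> hom C (cod C c) x \<and> cmp C h c = g"
  proof (rule ex1I[of _ s])
    show "s \<in> hom C (cod C c) x \<and> cmp C s c = g" using s by (simp add: hom_def)
    fix h assume "h \<in> hom C (cod C c) x \<and> cmp C h c = g"
    then show "h = s" using un[of h s] s by (auto simp: hom_def)
  qed
qed (use assms in auto)

lemma poD: "is_pushout C a b b' a' \<Longrightarrow> a \<in> Ar C \<and> b \<in> Ar C \<and> b' \<in> Ar C \<and> a' \<in> Ar C \<and>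
     dom C a = dom C b \<and> cod C b' = cod C a' \<and> dom C b' = cod C a \<and> dom C a' = cod C b \<and>
     cmp C b' a = cmp C a' b"
  by (simp add: is_pushout_def)

lemma po_factor:
  assumes "is_pushout C a b b' a'" "u \<in> Ar C" "v \<in> Ar C" "dom C u = cod C a" "dom C v = cod C b"
    "cod C u = cod C v" "cmp C u a = cmp C v b"
  shows "\<exists>h. h \<in> Ar C \<and> dom C h = cod C b' \<and> cod C h = cod C u \<and> cmp C h b' = u \<and> cmp C h a' = v"
proof -
  have "\<exists>!h. h \<in> hom C (cod C b') (cod C u) \<and> cmp C h b' = u \<and> cmp C h a' = v"
    using po_univ[OF assms(1), of "cod C u" u v] assms by (simp add: hom_def)
  then show ?thesis by (auto simp: hom_def)
qed

lemma po_unique: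
  assumes p: "is_pushout C a b b' a'" and h: "h1 \<in> Ar C" "h2 \<in> Ar C" "dom C h1 = cod C b'" "dom C h2 = cod C b'"
    "cod C h1 = cod C h2" and e: "cmp C h1 b' = cmp C h2 b'" "cmp C h1 a' = cmp C h2 a'"
  shows "h1 = h2"
proof -
  note d = poD[OF p]
  let ?u = "cmp C h1 b'" and ?v = "cmp C h1 a'"
  have "cmp C ?u a = cmp C ?v b" using d h assoc[of a b' h1] assoc[of b a' h1] by simp
  moreover have "?u \<in> hom C (cod C a) (cod C h1)" "?v \<in> hom C (cod C b) (cod C h1)"
    using d h by (auto simp: hom_def)
  ultimately have U: "\<exists>!h. h \<in> hom C (cod C b') (cod C h1) \<and> cmp C h b' = ?u \<and> cmp C h a' = ?v"
    using po_univ[OF p, of "cod C h1" ?u ?v] h by simp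
  show ?thesis
    by (rule ex1_uniq[OF U]) (use h e in \<open>auto simp: hom_def\<close>)
qed

lemma id_iso: "a \<in> Ob C \<Longrightarrow> is_iso C (idm C a)"
  unfolding is_iso_def hom_def using id_l[of "idm C a"] by force

end

context pa begin

lemma conf_closed:
  assumes "conflation_category C Conf" "(i, p) \<in> Conf" "is_kernel_cokernel_pair C i' p'"
    "is_iso C u'" "is_iso C u" "is_iso C u''"
    "dom C u' = dom C i" "cod C u' = dom C i'"
    "dom C u = cod C i" "cod C u = cod C i'"
    "dom C u'' = cod C p" "cod C u'' = cod C p'"
    "cmp C u i = cmp C i' u'" "cmp C u'' p = cmp C p' u"
  shows "(i', p') \<in> Conf"
proof -
  have "\<forall>(i, p) \<in> Conf. \<forall>i' p' u' u u''.
        is_kernel_cokernel_pair C i' p' \<and>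
        is_iso C u' \<and> is_iso C u \<and> is_iso C u'' \<and>
        dom C u' = dom C i \<and> cod C u' = dom C i' \<and>
        dom C u = cod C i \<and> cod C u = cod C i' \<and>
        dom C u'' = cod C p \<and> cod C u'' = cod C p' \<and>
        cmp C u i = cmp C i' u' \<and> cmp C u'' p = cmp C p' u
        \<longrightarrow> (i', p') \<in> Conf" using assms(1) unfolding conflation_category_def by blast
  from bspec[OF this assms(2)] have
    "\<forall>i' p' u' u u''.
        is_kernel_cokernel_pair C i' p' \<and>
        is_iso C u' \<and> is_iso C u \<and> is_iso C u'' \<and>
        dom C u' = dom C i \<and> cod C u' = dom C i' \<and>
        dom C u = cod C i \<and> cod C u = cod C i' \<and>
        dom C u'' = cod C p \<and> cod C u'' = cod C p' \<and>
        cmp C u i = cmp C i' u' \<and> cmp C u'' p = cmp C p' u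
        \<longrightarrow> (i', p') \<in> Conf" by simp
  then show ?thesis using assms(3-) by blast
qed

lemma conf_kc: "conflation_category C Conf \<Longrightarrow> (i, p) \<in> Conf \<Longrightarrow> is_kernel C i p \<and> is_cokernel C p i"
  unfolding conflation_category_def is_kernel_cokernel_pair_def by blast

lemma cok_uniq:
  assumes r: "is_cokernel C r a" and h: "is_cokernel C h a"
  shows "\<exists>\<phi>. is_iso C \<phi> \<and> dom C \<phi> = cod C r \<and> cod C \<phi> = cod C h \<and> cmp C \<phi> r = h"
proof -
  note R = cokD[OF r] and H = cokD[OF h]
  obtain \<phi> where p: "\<phi> \<in> Ar C" "dom C \<phi> = cod C r" "cod C \<phi> = cod C h" "cmp C \<phi> r = h"
    using cok_factor[OF r, of h] H by auto
  obtain \<psi> where q: "\<psi> \<in> Ar C" "dom C \<psi> = cod C h" "cod C \<psi> = cod C r" "cmp C \<psi> h = r"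
    using cok_factor[OF h, of r] R by auto
  have "cmp C (cmp C \<psi> \<phi>) r = cmp C \<psi> (cmp C \<phi> r)" using assoc[of r \<phi> \<psi>] p q R by simp
  also have "\<dots> = cmp C (idm C (cod C r)) r" using p q id_l R by simp
  finally have c1: "cmp C (cmp C \<psi> \<phi>) r = cmp C (idm C (cod C r)) r" .
  have e1: "cmp C \<psi> \<phi> = idm C (cod C r)"
    by (rule cok_epi[OF r _ _ _ _ _ c1]) (use p q R in auto)
  have "cmp C (cmp C \<phi> \<psi>) h = cmp C \<phi> (cmp C \<psi> h)" using assoc[of h \<psi> \<phi>] p q H by simp
  also have "\<dots> = cmp C (idm C (cod C h)) h" using p q id_l H by simp
  finally have c2: "cmp C (cmp C \<phi> \<psi>) h = cmp C (idm C (cod C h)) h" .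
  have e2: "cmp C \<phi> \<psi> = idm C (cod C h)"
    by (rule cok_epi[OF h _ _ _ _ _ c2]) (use p q H in auto)
  have "is_iso C \<phi>" unfolding is_iso_def hom_def using p q e1 e2 by auto
  then show ?thesis using p by blast
qed

lemma ker_uniq:
  assumes k: "is_kernel C k f" and k': "is_kernel C k' f"
  shows "\<exists>u. is_iso C u \<and> dom C u = dom C k \<and> cod C u = dom C k' \<and> cmp C k' u = k"
proof -
  note K = kerD[OF k] and K' = kerD[OF k']
  obtain u where p: "u \<in> Ar C" "dom C u = dom C k" "cod C u = dom C k'" "cmp C k' u = k"
    using ker_factor[OF k', of k] K by auto
  obtain v where q: "v \<in> Ar C" "dom C v = dom C k'" "cod C v = dom C k" "cmp C k v = k'"
    using ker_factor[OF k, of k'] K' by auto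
  have "cmp C k (cmp C v u) = cmp C (cmp C k v) u" using assoc[of u v k] p q K by simp
  also have "\<dots> = cmp C k (idm C (dom C k))" using p q id_r K by simp
  finally have c1: "cmp C k (cmp C v u) = cmp C k (idm C (dom C k))" .
  have e1: "cmp C v u = idm C (dom C k)"
    by (rule ker_mono[OF k _ _ _ _ _ c1]) (use p q K in auto)
  have "cmp C k' (cmp C u v) = cmp C (cmp C k' u) v" using assoc[of v u k'] p q K' by simp
  also have "\<dots> = cmp C k' (idm C (dom C k'))" using p q id_r K' by simp
  finally have c2: "cmp C k' (cmp C u v) = cmp C k' (idm C (dom C k'))" .
  have e2: "cmp C u v = idm C (dom C k')"
    by (rule ker_mono[OF k' _ _ _ _ _ c2]) (use p q K' in auto)
  have "is_iso C u" unfolding is_iso_def hom_def using p q e1 e2 by auto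
  then show ?thesis using p by blast
qed

lemma ker_iso_comp:
  assumes k: "is_kernel C a r" and ph: "is_iso C \<phi>" "dom C \<phi> = cod C r"
  shows "is_kernel C a (cmp C \<phi> r)"
proof -
  obtain \<psi> where q: "\<psi> \<in> Ar C" "dom C \<psi> = cod C \<phi>" "cod C \<psi> = dom C \<phi>" "cmp C \<psi> \<phi> = idm C (dom C \<phi>)"
    using ph(1) unfolding is_iso_def hom_def by auto
  have pA: "\<phi> \<in> Ar C" using ph(1) by (simp add: is_iso_def)
  note K = kerD[OF k]
  show ?thesis
  proof (rule kerI)
    show "cmp C (cmp C \<phi> r) a = zer C (dom C a) (cod C (cmp C \<phi> r))"
    proof -
      have "cmp C (cmp C \<phi> r) a = cmp C \<phi> (cmp C r a)" using assoc[of a r \<phi>] K pA ph by simp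
      also have "\<dots> = zer C (dom C a) (cod C \<phi>)" using K zero_right[of \<phi> "dom C a"] pA ph by simp
      finally show ?thesis using K pA ph by simp
    qed
  next
    fix t assume t: "t \<in> Ar C" "cod C t = dom C (cmp C \<phi> r)"
      "cmp C (cmp C \<phi> r) t = zer C (dom C t) (cod C (cmp C \<phi> r))"
    have rA: "r \<in> Ar C" and aA: "a \<in> Ar C" using K by auto
    have ct: "cod C t = dom C r" using t(2) rA pA ph(2) by simp
    have rt: "cmp C r t \<in> Ar C" "dom C (cmp C r t) = dom C t" "cod C (cmp C r t) = cod C r"
      using rA t(1) ct by auto
    have t3: "cmp C (cmp C \<phi> r) t = zer C (dom C t) (cod C \<phi>)" using t(3) rA pA ph(2) by simp
    have "cmp C r t = cmp C (idm C (cod C r)) (cmp C r t)" using id_l[OF rt(1)] rt(3) by simp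
    also have "\<dots> = cmp C (cmp C \<psi> \<phi>) (cmp C r t)" using q(4) ph(2) by simp
    also have "\<dots> = cmp C \<psi> (cmp C \<phi> (cmp C r t))"
      using assoc[OF rt(1) pA q(1)] rt(3) ph(2) q(2) by simp
    also have "\<dots> = cmp C \<psi> (cmp C (cmp C \<phi> r) t)" using assoc[OF t(1) rA pA ct ph(2)[symmetric]] by simp
    also have "\<dots> = cmp C \<psi> (zer C (dom C t) (cod C \<phi>))" using t3 by simp
    also have "\<dots> = zer C (dom C t) (cod C r)" using zero_right[OF q(1), of "dom C t"] q(2,3) ph(2) t(1) by simp
    finally have "cmp C r t = zer C (dom C t) (cod C r)" .
    then show "\<exists>s. s \<in> Ar C \<and> dom C s = dom C t \<and> cod C s = dom C a \<and> cmp C a s = t"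
      using ker_factor[OF k t(1) ct] by simp
  next
    fix x y assume "x \<in> Ar C" "y \<in> Ar C" "cod C x = dom C a" "cod C y = dom C a"
       "dom C x = dom C y" "cmp C a x = cmp C a y"
    then show "x = y" by (rule ker_mono[OF k])
  qed (use K pA ph in auto)
qed

lemma conf_cok:
  assumes cc: "conflation_category C Conf" and ip: "(i, p) \<in> Conf" and h: "is_cokernel C h i"
  shows "(i, h) \<in> Conf"
proof -
  note kc = conf_kc[OF cc ip]
  obtain \<phi> where ph: "is_iso C \<phi>" "dom C \<phi> = cod C p" "cod C \<phi> = cod C h" "cmp C \<phi> p = h"
    using cok_uniq[OF conjunct2[OF kc] h] by blast
  have "is_kernel C i h" using ker_iso_comp[OF conjunct1[OF kc] ph(1,2)] ph(4) by simp
  then have kch: "is_kernel_cokernel_pair C i h" using h by (simp add: is_kernel_cokernel_pair_def)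
  note K = kerD[OF conjunct1[OF kc]] and H = cokD[OF h]
  show ?thesis
  proof (rule conf_closed[OF cc ip kch id_iso[of "dom C i"] id_iso[of "cod C i"] ph(1)])
    have iA: "i \<in> Ar C" using K by simp
    show "cmp C (idm C (cod C i)) i = cmp C i (idm C (dom C i))" by (simp only: id_l[OF iA] id_r[OF iA])
    show "cmp C \<phi> p = cmp C h (idm C (cod C i))" using ph(4) id_r[of h] H by simp
  qed (use K H ph in auto)
qed

lemma conf_ker:
  assumes cc: "conflation_category C Conf" and kp: "(k, p) \<in> Conf" and j: "is_kernel C j p"
    and jc: "is_cokernel C p j"
  shows "(j, p) \<in> Conf"
proof -
  note kc = conf_kc[OF cc kp]
  obtain u where u: "is_iso C u" "dom C u = dom C k" "cod C u = dom C j" "cmp C j u = k"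
    using ker_uniq[OF conjunct1[OF kc] j] by blast
  have kcj: "is_kernel_cokernel_pair C j p" using j jc by (simp add: is_kernel_cokernel_pair_def)
  note K = kerD[OF conjunct1[OF kc]] and J = kerD[OF j]
  show ?thesis
  proof (rule conf_closed[OF cc kp kcj u(1) id_iso[of "cod C k"] id_iso[of "cod C p"]])
    have kA: "k \<in> Ar C" using K by simp
    show "cmp C (idm C (cod C k)) k = cmp C j u" by (simp only: id_l[OF kA] u(4))
    show "cmp C (idm C (cod C p)) p = cmp C p (idm C (cod C k))" using id_l id_r K by simp
  qed (use K J u in auto)
qed

end 

theorem mainTheorem9:
  fixes C :: "('o, 'm) addcat" and Conf :: "('m \<times> 'm) set" and A :: "'o set"
    and f g :: 'm
  assumes "deflation_exact C Conf"
    and "A \<subseteq> Ob C"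
    and "axiom_A1 C Conf A"
    and "axiom_A3 C Conf A"
    and "A_inv_inflation C Conf A f"
    and "A_inv_inflation C Conf A g"
    and "cod C f = dom C g"
  shows "A_inv_inflation C Conf A (cmp C g f)"
proof -
  have cc: "conflation_category C Conf" using assms(1) by (simp add: deflation_exact_def)
  have "is_preadditive C" using cc by (simp add: conflation_category_def is_additive_def)
  then interpret pa C by unfold_locales
  obtain p where fp: "(f, p) \<in> Conf" "cod C p \<in> A" using assms(5) by (auto simp: A_inv_inflation_def)
  obtain q where gq: "(g, q) \<in> Conf" "cod C q \<in> A" using assms(6) by (auto simp: A_inv_inflation_def)
  have kf: "is_kernel C f p" and cp: "is_cokernel C p f" using conf_kc[OF cc fp(1)] by auto
  have kg: "is_kernel C g q" and cq: "is_cokernel C q g" using conf_kc[OF cc gq(1)] by auto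
  have fA: "f \<in> Ar C" and pA: "p \<in> Ar C" and fp1: "cod C f = dom C p"
    and fp2: "cmp C p f = zer C (dom C f) (cod C p)" using kerD[OF kf] by auto
  have gA: "g \<in> Ar C" and qA: "q \<in> Ar C" and gq1: "cod C g = dom C q"
    and gq2: "cmp C q g = zer C (dom C g) (cod C q)" using kerD[OF kg] by auto
  have "inflation Conf g" "deflation Conf p" using gq fp by (auto simp: inflation_def deflation_def)
  moreover have dgp: "dom C g = dom C p" using fp1 assms(7) by simp
  ultimately obtain b' a' where po: "is_pushout C g p b' a'" and db: "deflation Conf b'"
      and ia: "inflation Conf a'"
    using assms(4) fp(2) unfolding axiom_A3_def by blast
  have b'A: "b' \<in> Ar C" and a'A: "a' \<in> Ar C" and cba: "cod C b' = cod C a'"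
    and db': "dom C b' = cod C g" and da': "dom C a' = cod C p" and sq: "cmp C b' g = cmp C a' p"
    using poD[OF po] by auto
  have obq: "cod C q \<in> Ob C" and obp: "cod C p \<in> Ob C" using qA pA by auto

  have "cmp C q g = cmp C (zer C (cod C p) (cod C q)) p"
    using gq2 zero_left[OF pA obq] dgp by simp
  then obtain h where hA: "h \<in> Ar C" and dh: "dom C h = cod C b'" and ch: "cod C h = cod C q"
      and hb: "cmp C h b' = q" and ha: "cmp C h a' = zer C (cod C p) (cod C q)"
    using po_factor[OF po, of q "zer C (cod C p) (cod C q)"] qA obq obp gq1 by auto

  have hc: "is_cokernel C h a'"
  proof (rule cokI)
    show "h \<in> Ar C" "a' \<in> Ar C" "dom C h = cod C a'" using hA a'A dh cba by auto
    show "cmp C h a' = zer C (dom C a') (cod C h)" using ha da' ch by simp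
  next
    fix t assume t: "t \<in> Ar C" "dom C t = cod C a'" "cmp C t a' = zer C (dom C a') (cod C t)"
    let ?tb = "cmp C t b'"
    have tb: "?tb \<in> Ar C" "dom C ?tb = cod C g" "cod C ?tb = cod C t"
      using t b'A cba db' by auto
    have "cmp C ?tb g = cmp C t (cmp C b' g)" using assoc[OF gA b'A t(1)] db' t(2) cba by simp
    also have "\<dots> = cmp C (cmp C t a') p" using sq assoc[OF pA a'A t(1)] da' t(2) by simp
    also have "\<dots> = zer C (dom C g) (cod C ?tb)"
      using t(3) da' zero_left[OF pA, of "cod C t"] t(1) dgp tb(3) by simp
    finally have "cmp C ?tb g = zer C (dom C g) (cod C ?tb)" .
    then obtain s where s: "s \<in> Ar C" "dom C s = cod C q" "cod C s = cod C t" "cmp C s q = ?tb"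
      using cok_factor[OF cq tb(1)] tb(2,3) by auto
    let ?sh = "cmp C s h"
    have sh: "?sh \<in> Ar C" "dom C ?sh = cod C b'" "cod C ?sh = cod C t"
      using s hA ch dh by auto
    have e1: "cmp C ?sh b' = cmp C t b'"
      using assoc[OF b'A hA s(1)] dh ch s(2) hb s(4) by simp
    have "cmp C ?sh a' = cmp C s (cmp C h a')"
      using assoc[OF a'A hA s(1)] dh ch s(2) cba by simp
    also have "\<dots> = zer C (cod C p) (cod C t)"
      using ha zero_right[OF s(1), of "cod C p"] s(2,3) obp by simp
    also have "\<dots> = cmp C t a'" using t(3) da' by simp
    finally have e2: "cmp C ?sh a' = cmp C t a'" .
    have "?sh = t" using po_unique[OF po sh(1) t(1) sh(2) _ _ e1 e2] t(2) cba sh(3) by simp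
    then show "\<exists>s. s \<in> Ar C \<and> dom C s = cod C h \<and> cod C s = cod C t \<and> cmp C s h = t"
      using s ch by auto
  next
    fix x y assume xy: "x \<in> Ar C" "y \<in> Ar C" "dom C x = cod C h" "dom C y = cod C h"
      "cod C x = cod C y" "cmp C x h = cmp C y h"
    have "cmp C x q = cmp C (cmp C x h) b'" using assoc[OF b'A hA xy(1)] dh xy(3) hb by simp
    also have "\<dots> = cmp C (cmp C y h) b'" using xy(6) by simp
    also have "\<dots> = cmp C y q" using assoc[OF b'A hA xy(2)] dh xy(4) hb by simp
    finally have "cmp C x q = cmp C y q" .
    then show "x = y" using cok_epi[OF cq xy(1,2)] xy(3,4,5) ch by simp
  qed
  obtain r where ar: "(a', r) \<in> Conf" using ia by (auto simp: inflation_def)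
  have ah: "(a', h) \<in> Conf" using conf_cok[OF cc ar hc] .
  have "cod C a' \<in> A \<longleftrightarrow> dom C a' \<in> A \<and> cod C h \<in> A"
    using bspec[OF assms(3)[unfolded axiom_A1_def] ah] by simp
  then have PA: "cod C b' \<in> A" using da' ch fp(2) gq(2) cba by simp

  let ?gf = "cmp C g f"
  have gf: "?gf \<in> Ar C" "dom C ?gf = dom C f" "cod C ?gf = cod C g"
    using fA gA assms(7) by auto
  have ka: "is_kernel C a' r" using conf_kc[OF cc ar] by simp
  have bgf: "cmp C b' ?gf = zer C (dom C ?gf) (cod C b')"
  proof -
    have "cmp C b' ?gf = cmp C (cmp C b' g) f" using assoc[OF fA gA b'A] assms(7) db' by simp
    also have "\<dots> = cmp C (cmp C a' p) f" using sq by simp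
    also have "\<dots> = cmp C a' (cmp C p f)" using assoc[OF fA pA a'A] fp1 da' by simp
    also have "\<dots> = zer C (dom C f) (cod C b')"
      using fp2 zero_right[OF a'A, of "dom C f"] da' cba fA by simp
    finally show ?thesis using gf by simp
  qed
  have gfk: "is_kernel C ?gf b'"
  proof (rule kerI)
    show "?gf \<in> Ar C" "b' \<in> Ar C" "cod C ?gf = dom C b'" using gf b'A db' by auto
    show "cmp C b' ?gf = zer C (dom C ?gf) (cod C b')" by (rule bgf)
  next
    fix t assume t: "t \<in> Ar C" "cod C t = dom C b'" "cmp C b' t = zer C (dom C t) (cod C b')"
    have ct: "cod C t = dom C q" using t(2) db' gq1 by simp
    have "cmp C q t = cmp C (cmp C h b') t" using hb by simp
    also have "\<dots> = cmp C h (cmp C b' t)" using assoc[OF t(1) b'A hA] t(2) dh by simp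
    also have "\<dots> = zer C (dom C t) (cod C q)"
      using t(3) zero_right[OF hA, of "dom C t"] dh ch t(1) by simp
    finally obtain s where s: "s \<in> Ar C" "dom C s = dom C t" "cod C s = dom C g" "cmp C g s = t"
      using ker_factor[OF kg t(1) ct] by auto
    have "cmp C a' (cmp C p s) = cmp C (cmp C a' p) s" using assoc[OF s(1) pA a'A] s(3) dgp da' by simp
    also have "\<dots> = cmp C b' (cmp C g s)" using sq[symmetric] assoc[OF s(1) gA b'A] s(3) db' by simp
    also have "\<dots> = zer C (dom C t) (cod C a')" using s(4) t(3) cba by simp
    also have "\<dots> = cmp C a' (zer C (dom C t) (cod C p))"
      using zero_right[OF a'A, of "dom C t"] da' t(1) by simp
    finally have "cmp C a' (cmp C p s) = cmp C a' (zer C (dom C t) (cod C p))" .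
    then have ps: "cmp C p s = zer C (dom C s) (cod C p)"
      using ker_mono[OF ka, of "cmp C p s" "zer C (dom C t) (cod C p)"] s pA dgp da' t(1) obp by simp
    obtain w where w: "w \<in> Ar C" "dom C w = dom C s" "cod C w = dom C f" "cmp C f w = s"
      using ker_factor[OF kf s(1) _ ps] s(3) dgp by auto
    have "cmp C ?gf w = cmp C g (cmp C f w)" using assoc[OF w(1) fA gA] w(3) assms(7) by simp
    then show "\<exists>s. s \<in> Ar C \<and> dom C s = dom C t \<and> cod C s = dom C ?gf \<and> cmp C ?gf s = t"
      using w s gf by auto
  next
    fix x y assume xy: "x \<in> Ar C" "y \<in> Ar C" "cod C x = dom C ?gf" "cod C y = dom C ?gf"
      "dom C x = dom C y" "cmp C ?gf x = cmp C ?gf y"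
    have "cmp C g (cmp C f x) = cmp C g (cmp C f y)"
      using xy assoc[OF xy(1) fA gA] assoc[OF xy(2) fA gA] gf assms(7) by simp
    then have "cmp C f x = cmp C f y"
      using ker_mono[OF kg, of "cmp C f x" "cmp C f y"] xy fA gf assms(7) by simp
    then show "x = y" using ker_mono[OF kf xy(1,2)] xy gf by simp
  qed
  obtain k where kb: "(k, b') \<in> Conf" using db by (auto simp: deflation_def)
  have gfc: "is_cokernel C b' ?gf"
  proof (rule cokI)
    show "b' \<in> Ar C" "?gf \<in> Ar C" "dom C b' = cod C ?gf" using gf b'A db' by auto
    show "cmp C b' ?gf = zer C (dom C ?gf) (cod C b')" by (rule bgf)
  next
    fix t assume t: "t \<in> Ar C" "dom C t = cod C ?gf" "cmp C t ?gf = zer C (dom C ?gf) (cod C t)"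
    let ?tg = "cmp C t g"
    have tg: "?tg \<in> Ar C" "dom C ?tg = cod C f" "cod C ?tg = cod C t"
      using t gA gf assms(7) by auto
    have "cmp C ?tg f = zer C (dom C f) (cod C ?tg)"
      using assoc[OF fA gA t(1)] t gf assms(7) tg(3) by simp
    then obtain s where s: "s \<in> Ar C" "dom C s = cod C p" "cod C s = cod C t" "cmp C s p = ?tg"
      using cok_factor[OF cp tg(1,2)] tg(3) by auto
    show "\<exists>s. s \<in> Ar C \<and> dom C s = cod C b' \<and> cod C s = cod C t \<and> cmp C s b' = t"
      using po_factor[OF po t(1) s(1) _ s(2)] t(2) gf s(3,4) by auto
  next
    fix x y assume xy: "x \<in> Ar C" "y \<in> Ar C" "dom C x = cod C b'" "dom C y = cod C b'"
      "cod C x = cod C y" "cmp C x b' = cmp C y b'"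
    have "is_cokernel C b' k" using conf_kc[OF cc kb] by simp
    then show "x = y" using cok_epi[OF _ xy] by simp
  qed
  have "(?gf, b') \<in> Conf" by (rule conf_ker[OF cc kb gfk gfc])
  then show ?thesis using PA by (auto simp: A_inv_inflation_def)
qed


end
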